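(* Let $\Omega\subset\mathbb{C}$ be a bounded domain and $\varphi$ a smooth real-valued function on $\Omega$. Suppose that for every point $a\in\Omega$ there exist $\gamma_a\in(0,\delta(a))$ and a lower semi-continuous function $g_a\colon[0,\gamma_a]\to\mathbb{R}_{\geq0}$ such that $L_\varphi(a,r)\leq e^{-g_a(r)r^2}$ for all $r\in(0,\gamma_a)$. Then for every $a\in\Omega$, $$\sqrt{-1}\partial\overline{\partial}\varphi(a)\geq 2g_a(0)\,\omega,\qquad\text{i.e.}\qquad \frac{\partial^2\varphi}{\partial z\partial\bar z}(a)\geq 2g_a(0),$$ where $\omega=\sqrt{-1}\,\mathrm{d}z\wedge\mathrm{d}\bar z$.
   Context: For $a\in\mathbb{C}$ and $r>0$, $\Delta(a;r)=\{z\in\mathbb{C}\mid |z-a|<r\}$. For a domain $\Omega\subset\mathbb{C}$ and $a\in\Omega$, $\delta(a):=\sup\{r>0\mid \Delta(a;r)\subset\Omega\}$, and $\Omega_\delta:=\{(a,r)\in\Omega\times\mathbb{R}\mid 0<r<\delta(a)\}$. For a domain $D$ and a smooth real function $\varphi$, $A^2(D,\varphi)$ denotes the space of holomorphic functions $f$ on $D$ with $\int_D|f|^2e^{-\varphi}<\infty$ (integrals with respect to Lebesgue measure). The $L^2$-extension index of $\varphi$ is the function on $\Omega_\delta$ $$L_\varphi(a,r)=\frac{1}{\pi r^2K_{\Delta(a;r),\varphi}(a)}=\inf\left\{\frac{\int_{\Delta(a;r)}|f|^2e^{-\varphi}}{\pi r^2e^{-\varphi(a)}}\ \middle|\ f\in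 A^2(\Delta(a;r),\varphi),\ f(a)=1\right\},$$ where $K_{\Delta(a;r),\varphi}$ is the weighted Bergman kernel of $\Delta(a;r)$ with weight $e^{-\varphi}$. *)

theory Defs
  imports "HOL-Analysis.Analysis"
begin

definition pdx :: "(complex \<Rightarrow> real) \<Rightarrow> complex \<Rightarrow> real" where
  "pdx f z = deriv (\<lambda>t::real. f (z + of_real t)) 0"

definition pdy :: "(complex \<Rightarrow> real) \<Rightarrow> complex \<Rightarrow> real" where
  "pdy f z = deriv (\<lambda>t::real. f (z + \<i> * of_real t)) 0"

fun iter_pd :: "bool list \<Rightarrow> (complex \<Rightarrow> real) \<Rightarrow> complex \<Rightarrow> real" where
  "iter_pd [] f = f"
| "iter_pd (b # bs) f = (if b then pdx else pdy) (iter_pd bs f)"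

definition smooth_on :: "complex set \<Rightarrow> (complex \<Rightarrow> real) \<Rightarrow> bool" where
  "smooth_on \<Omega> f \<longleftrightarrow>
     (\<forall>w. continuous_on \<Omega> (iter_pd w f) \<and>
          (\<forall>z\<in>\<Omega>. (\<lambda>t::real. iter_pd w f (z + of_real t)) differentiable (at 0) \<and>
                  (\<lambda>t::real. iter_pd w f (z + \<i> * of_real t)) differentiable (at 0)))"

definition dzdzbar :: "(complex \<Rightarrow> real) \<Rightarrow> complex \<Rightarrow> real" where
  "dzdzbar f a = (pdx (pdx f) a + pdy (pdy f) a) / 4"

definition delta :: "complex set \<Rightarrow> complex \<Rightarrow> real" where
  "delta \<Omega> a = Sup {r. r > 0 \<and> ball a r \<subseteq> \<Omega>}"

definition lower_semicontinuous_on :: "real set \<Rightarrow> (real \<Rightarrow> real) \<Rightarrow> bool" where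
  "lower_semicontinuous_on S g \<longleftrightarrow>
     (\<forall>x\<in>S. \<forall>c. c < g x \<longrightarrow> (\<forall>\<^sub>F y in at x within S. c < g y))"

definition L2_ext_index :: "(complex \<Rightarrow> real) \<Rightarrow> complex \<Rightarrow> real \<Rightarrow> real" where
  "L2_ext_index \<phi> a r = Inf
     {(LINT z:ball a r|lborel. (cmod (f z))\<^sup>2 * exp (- \<phi> z)) / (pi * r\<^sup>2 * exp (- \<phi> a)) | f.
        f holomorphic_on ball a r \<and> f a = 1 \<and>
        set_integrable lborel (ball a r) (\<lambda>z. (cmod (f z))\<^sup>2 * exp (- \<phi> z))}"

end

theory Submission
  imports Defs "HOL-Complex_Analysis.Complex_Analysis"
begin


lemma lborel_complex:
  "(lborel :: complex measure) = distr (lborel \<Otimes>\<^sub>M lborel) borel (\<lambda>(x,y). Complex x y)"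
proof (rule lborel_eqI)
  fix l u :: complex
  assume le: "\<And>b. b \<in> Basis \<Longrightarrow> l \<bullet> b \<le> u \<bullet> b"
  have h1: "Re l \<le> Re u" "Im l \<le> Im u" using le[of 1] le[of \<i>] by (auto simp: Basis_complex_def inner_complex_def)
  have m: "(\<lambda>(x,y). Complex x y) \<in> (lborel \<Otimes>\<^sub>M lborel) \<rightarrow>\<^sub>M borel"
    unfolding Complex_eq by measurable
  have pre: "(\<lambda>(x,y). Complex x y) -` box l u \<inter> space (lborel \<Otimes>\<^sub>M lborel) = {Re l<..<Re u} \<times> {Im l<..<Im u}"
    by (auto simp: box_def Basis_complex_def inner_complex_def space_pair_measure)
  show "emeasure (distr (lborel \<Otimes>\<^sub>M lborel) borel (\<lambda>(x,y). Complex x y)) (box l u) = (\<Prod>b\<in>Basis. (u - l) \<bullet> b)"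
    using h1 by (simp add: emeasure_distr[OF m] pre lborel.emeasure_pair_measure_Times Basis_complex_def inner_complex_def ennreal_mult)
qed simp



lemma nn_integral_complex:
  fixes f :: "complex \<Rightarrow> ennreal"
  assumes [measurable]: "f \<in> borel_measurable borel"
  shows "(\<integral>\<^sup>+z. f z \<partial>lborel) = (\<integral>\<^sup>+x. (\<integral>\<^sup>+y. f (Complex x y) \<partial>lborel) \<partial>lborel)"
proof -
  have m: "(\<lambda>(x,y). Complex x y) \<in> (lborel \<Otimes>\<^sub>M lborel) \<rightarrow>\<^sub>M borel"
    unfolding Complex_eq by measurable
  have "(\<integral>\<^sup>+z. f z \<partial>lborel) = (\<integral>\<^sup>+p. f (case p of (x,y) \<Rightarrow> Complex x y) \<partial>(lborel \<Otimes>\<^sub>M lborel))"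
    by (subst lborel_complex) (rule nn_integral_distr[OF m], simp)
  also have "\<dots> = (\<integral>\<^sup>+x. (\<integral>\<^sup>+y. f (Complex x y) \<partial>lborel) \<partial>lborel)"
  proof -
    have mm: "(\<lambda>p. f (case p of (x,y) \<Rightarrow> Complex x y)) \<in> borel_measurable (lborel \<Otimes>\<^sub>M lborel)"
      using m by measurable
    show ?thesis
      using lborel.nn_integral_fst[OF mm] by simp
  qed
  finally show ?thesis .
qed


lemma nn_integral_complex':
  fixes f :: "complex \<Rightarrow> ennreal"
  assumes [measurable]: "f \<in> borel_measurable borel"
  shows "(\<integral>\<^sup>+z. f z \<partial>lborel) = (\<integral>\<^sup>+y. (\<integral>\<^sup>+x. f (Complex x y) \<partial>lborel) \<partial>lborel)"
proof -
  have "(\<lambda>(x,y). f (Complex x y)) \<in> borel_measurable (lborel \<Otimes>\<^sub>M lborel)"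
    unfolding Complex_eq by measurable
  from lborel_pair.Fubini'[OF this] show ?thesis
    by (simp add: nn_integral_complex[OF assms])
qed

lemma nn_integral_transl_real:
  fixes g :: "real \<Rightarrow> ennreal"
  assumes [measurable]: "g \<in> borel_measurable borel"
  shows "(\<integral>\<^sup>+x. g (x + c) \<partial>lborel) = (\<integral>\<^sup>+x. g x \<partial>lborel)"
  using nn_integral_real_affine[OF assms, of 1 c] by (simp add: add.commute)

lemma shear_x:
  fixes f :: "complex \<Rightarrow> ennreal"
  assumes [measurable]: "f \<in> borel_measurable borel"
  shows "(\<integral>\<^sup>+z. f (Complex (Re z + t * Im z) (Im z)) \<partial>lborel) = (\<integral>\<^sup>+z. f z \<partial>lborel)"
proof -
  have m1: "(\<lambda>z. f (Complex (Re z + t * Im z) (Im z))) \<in> borel_measurable borel"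
    unfolding Complex_eq by measurable
  have "(\<integral>\<^sup>+z. f (Complex (Re z + t * Im z) (Im z)) \<partial>lborel)
     = (\<integral>\<^sup>+y. (\<integral>\<^sup>+x. f (Complex (x + t * y) y) \<partial>lborel) \<partial>lborel)"
    using nn_integral_complex'[OF m1] by simp
  also have "\<dots> = (\<integral>\<^sup>+y. (\<integral>\<^sup>+x. f (Complex x y) \<partial>lborel) \<partial>lborel)"
  proof (rule nn_integral_cong)
    fix y :: real
    have m2: "(\<lambda>x. f (Complex x y)) \<in> borel_measurable borel"
      unfolding Complex_eq by measurable
    show "(\<integral>\<^sup>+x. f (Complex (x + t * y) y) \<partial>lborel) = (\<integral>\<^sup>+x. f (Complex x y) \<partial>lborel)"
      by (rule nn_integral_transl_real[OF m2])
  qed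
  also have "\<dots> = (\<integral>\<^sup>+z. f z \<partial>lborel)"
    using nn_integral_complex'[OF assms] by simp
  finally show ?thesis .
qed

lemma shear_y:
  fixes f :: "complex \<Rightarrow> ennreal"
  assumes [measurable]: "f \<in> borel_measurable borel"
  shows "(\<integral>\<^sup>+z. f (Complex (Re z) (Im z + t * Re z)) \<partial>lborel) = (\<integral>\<^sup>+z. f z \<partial>lborel)"
proof -
  have m1: "(\<lambda>z. f (Complex (Re z) (Im z + t * Re z))) \<in> borel_measurable borel"
    unfolding Complex_eq by measurable
  have "(\<integral>\<^sup>+z. f (Complex (Re z) (Im z + t * Re z)) \<partial>lborel)
     = (\<integral>\<^sup>+x. (\<integral>\<^sup>+y. f (Complex x (y + t * x)) \<partial>lborel) \<partial>lborel)"
    using nn_integral_complex[OF m1] by simp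
  also have "\<dots> = (\<integral>\<^sup>+x. (\<integral>\<^sup>+y. f (Complex x y) \<partial>lborel) \<partial>lborel)"
  proof (rule nn_integral_cong)
    fix x :: real
    have m2: "(\<lambda>y. f (Complex x y)) \<in> borel_measurable borel"
      unfolding Complex_eq by measurable
    show "(\<integral>\<^sup>+y. f (Complex x (y + t * x)) \<partial>lborel) = (\<integral>\<^sup>+y. f (Complex x y) \<partial>lborel)"
      by (rule nn_integral_transl_real[OF m2])
  qed
  also have "\<dots> = (\<integral>\<^sup>+z. f z \<partial>lborel)"
    using nn_integral_complex[OF assms] by simp
  finally show ?thesis .
qed



definition "Sx t z = Complex (Re z + t * Im z) (Im z)"
definition "Sy t z = Complex (Re z) (Im z + t * Re z)"

lemma Sx_meas[measurable]: "Sx t \<in> borel_measurable borel"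
  unfolding Sx_def Complex_eq by measurable
lemma Sy_meas[measurable]: "Sy t \<in> borel_measurable borel"
  unfolding Sy_def Complex_eq by measurable

lemma shear_x':
  fixes f :: "complex \<Rightarrow> ennreal"
  assumes "f \<in> borel_measurable borel"
  shows "(\<integral>\<^sup>+z. f (Sx t z) \<partial>lborel) = (\<integral>\<^sup>+z. f z \<partial>lborel)"
  unfolding Sx_def by (rule shear_x[OF assms])

lemma shear_y':
  fixes f :: "complex \<Rightarrow> ennreal"
  assumes "f \<in> borel_measurable borel"
  shows "(\<integral>\<^sup>+z. f (Sy t z) \<partial>lborel) = (\<integral>\<^sup>+z. f z \<partial>lborel)"
  unfolding Sy_def by (rule shear_y[OF assms])

lemma rot_decomp:
  assumes "norm u = 1" "Im u \<noteq> 0"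
  shows "u * z = Sx (-(1 - Re u) / Im u) (Sy (Im u) (Sx (-(1 - Re u) / Im u) z))"
proof -
  have n: "(Re u)^2 + (Im u)^2 = 1" using assms(1)
    by (metis cmod_power2 power_one)
  show ?thesis using assms(2)
    apply (simp add: Sx_def Sy_def complex_eq_iff)
    apply (simp add: field_simps)
    using n by algebra
qed

lemma rot_nn_integral:
  fixes f :: "complex \<Rightarrow> ennreal"
  assumes [measurable]: "f \<in> borel_measurable borel" and u: "norm u = 1" "Im u \<noteq> 0"
  shows "(\<integral>\<^sup>+z. f (u * z) \<partial>lborel) = (\<integral>\<^sup>+z. f z \<partial>lborel)"
proof -
  define a where "a = -(1 - Re u) / Im u"
  have e1: "(\<integral>\<^sup>+z. f (u * z) \<partial>lborel) = (\<integral>\<^sup>+z. f (Sx a (Sy (Im u) (Sx a z))) \<partial>lborel)"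
    using rot_decomp[OF u] by (simp add: a_def)
  have e2: "(\<integral>\<^sup>+z. f (Sx a (Sy (Im u) (Sx a z))) \<partial>lborel) = (\<integral>\<^sup>+z. f (Sx a (Sy (Im u) z)) \<partial>lborel)"
    using shear_x'[of "\<lambda>w. f (Sx a (Sy (Im u) w))" a] by simp
  have e3: "(\<integral>\<^sup>+z. f (Sx a (Sy (Im u) z)) \<partial>lborel) = (\<integral>\<^sup>+z. f (Sx a z) \<partial>lborel)"
    using shear_y'[of "\<lambda>w. f (Sx a w)" "Im u"] by simp
  have e4: "(\<integral>\<^sup>+z. f (Sx a z) \<partial>lborel) = (\<integral>\<^sup>+z. f z \<partial>lborel)"
    using shear_x'[of f a] by simp
  show ?thesis using e1 e2 e3 e4 by simp
qed

lemma rot_distr: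
  assumes u: "norm u = 1" "Im u \<noteq> 0"
  shows "distr lborel borel (\<lambda>z. u * z) = (lborel :: complex measure)"
proof (rule measure_eqI)
  show "sets (distr lborel borel ((*) u)) = sets lborel" by simp
  fix A :: "complex set" assume "A \<in> sets (distr lborel borel ((*) u))"
  then have A[measurable]: "A \<in> sets borel" by simp
  have "emeasure (distr lborel borel ((*) u)) A = (\<integral>\<^sup>+z. indicator A (u * z) \<partial>lborel)"
  proof -
    have "emeasure lborel ((*) u -` A) = (\<integral>\<^sup>+z. indicator ((*) u -` A) z \<partial>lborel)"
      by (rule nn_integral_indicator[symmetric]) (simp add: measurable_sets_borel[OF _ A])
    then show ?thesis
      by (subst emeasure_distr) (auto intro!: nn_integral_cong split: split_indicator)
  qed
  also have "\<dots> = (\<integral>\<^sup>+z. indicator A z \<partial>lborel)"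
    by (rule rot_nn_integral[OF _ u]) measurable
  also have "\<dots> = emeasure lborel A" by simp
  finally show "emeasure (distr lborel borel ((*) u)) A = emeasure lborel A" .
qed



lemma rot_integral:
  fixes h :: "complex \<Rightarrow> 'b::{banach, second_countable_topology}"
  assumes u: "norm u = 1" "Im u \<noteq> 0" and h[measurable]: "h \<in> borel_measurable borel"
  shows "(LINT z|lborel. h (u * z)) = (LINT z|lborel. h z)"
proof -
  have "(LINT z|lborel. h (u * z)) = integral\<^sup>L (distr lborel borel ((*) u)) h"
    by (rule integral_distr[symmetric]) simp_all
  also have "\<dots> = (LINT z|lborel. h z)" by (simp add: rot_distr[OF u])
  finally show ?thesis .
qed

lemma cis_root_props:
  fixes n :: nat assumes "n \<ge> 1"
  shows "norm (cis (pi / (n+1))) = 1" "Im (cis (pi / (n+1))) \<noteq> 0" "cis (pi / (n+1)) ^ n \<noteq> 1"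
proof -
  show "norm (cis (pi / (n+1))) = 1" by simp
  have p: "0 < pi / (n+1)" "pi / (n+1) < pi" using assms by (auto simp: field_simps)
  show "Im (cis (pi / (n+1))) \<noteq> 0" using sin_gt_zero[OF p] by simp
  have q: "0 < real n * (pi / (n+1))" "real n * (pi / (n+1)) < pi" using assms by (auto simp: field_simps)
  have "sin (real n * (pi / (n+1))) > 0" using sin_gt_zero[OF q] .
  then have "Im (cis (pi / (n+1)) ^ n) > 0" by (simp only: sin_n_Im_cis_pow_n)
  then show "cis (pi / (n+1)) ^ n \<noteq> 1" by auto
qed

lemma vanish:
  fixes W :: "real \<Rightarrow> real" and n :: nat
  assumes n: "n \<ge> 1" and W[measurable]: "W \<in> borel_measurable borel"
  shows "(LINT z|lborel. indicator (ball 0 \<rho>) z *\<^sub>R (complex_of_real (W (norm z)) * z ^ n)) = 0"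
proof -
  define u where "u = cis (pi / (n+1))"
  note up = cis_root_props[OF n, folded u_def]
  define h where "h z = indicator (ball 0 \<rho>) z *\<^sub>R (complex_of_real (W (norm z)) * z ^ n)" for z :: complex
  have [measurable]: "ball 0 \<rho> \<in> sets borel" by simp
  have m1: "(\<lambda>x::complex. W (norm x)) \<in> borel_measurable borel"
    using measurable_compose[OF borel_measurable_norm W] by (simp add: o_def)
  have m2: "(\<lambda>x::complex. complex_of_real (W (norm x)) * x ^ n) \<in> borel_measurable borel"
    using m1 by measurable
  have hm[measurable]: "h \<in> borel_measurable borel" unfolding h_def using m2 by measurable
  have hu: "h (u * z) = u ^ n * h z" for z
    using up(1) by (simp add: h_def norm_mult power_mult_distrib indicator_def)
  have "integral\<^sup>L lborel h = (LINT z|lborel. h (u * z))"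
    by (rule rot_integral[OF up(1,2) hm, symmetric])
  also have "\<dots> = u ^ n * integral\<^sup>L lborel h" by (simp add: hu)
  finally have "(1 - u ^ n) * integral\<^sup>L lborel h = 0" by (simp add: algebra_simps)
  with up(3) have "integral\<^sup>L lborel h = 0" by simp
  then show ?thesis by (simp add: h_def[abs_def])
qed



lemma integrable_ball_cont:
  fixes g :: "complex \<Rightarrow> 'b::{banach, second_countable_topology}"
  assumes "continuous_on UNIV g"
  shows "integrable lborel (\<lambda>z. indicator (ball c \<rho>) z *\<^sub>R g z)"
proof (rule Bochner_Integration.integrable_bound[where f="\<lambda>z. indicator (cball c \<rho>) z *\<^sub>R g z"])
  show "integrable lborel (\<lambda>z. indicator (cball c \<rho>) z *\<^sub>R g z)"
    by (rule borel_integrable_compact) (auto intro: continuous_on_subset[OF assms])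
  show "(\<lambda>z. indicator (ball c \<rho>) z *\<^sub>R g z) \<in> borel_measurable lborel"
    using borel_measurable_continuous_on_indicator[of "ball c \<rho>" g] continuous_on_subset[OF assms]
    by simp
  show "AE x in lborel. norm (indicator (ball c \<rho>) x *\<^sub>R g x) \<le> norm (indicator (cball c \<rho>) x *\<^sub>R g x)"
    by (auto simp: indicator_def)
qed

lemma mean_value_weighted:
  fixes F :: "complex \<Rightarrow> complex" and W :: "real \<Rightarrow> real"
  assumes holF: "F holomorphic_on ball 0 r" and \<rho>: "0 < \<rho>" "\<rho> < r" and Wc: "continuous_on UNIV W"
  shows "(LINT z|lborel. indicator (ball 0 \<rho>) z *\<^sub>R (complex_of_real (W (norm z)) * F z))
       = F 0 * (LINT (z::complex)|lborel. indicator (ball 0 \<rho>) z *\<^sub>R complex_of_real (W (norm z)))"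
proof -
  define R where "R = (\<rho> + r) / 2"
  have R: "\<rho> < R" "R < r" using \<rho> by (auto simp: R_def)
  define a where "a n = (deriv ^^ n) F 0 / fact n" for n
  have sums: "(\<lambda>n. a n * w ^ n) sums F w" if "w \<in> ball 0 r" for w
    using holomorphic_power_series[OF holF that] by (simp add: a_def)
  have "(\<lambda>n. a n * of_real R ^ n) sums F (of_real R)"
    using R \<rho> by (intro sums) auto
  then have "(\<lambda>n. a n * of_real R ^ n) \<longlonglongrightarrow> 0"
    by (intro summable_LIMSEQ_zero) (auto simp: sums_iff)
  then have "Bseq (\<lambda>n. a n * of_real R ^ n)" by (rule convergent_imp_Bseq[OF convergentI])
  then obtain B where B: "B > 0" "\<And>n. norm (a n * of_real R ^ n) \<le> B"
    by (auto simp: Bseq_def)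
  define q where "q = \<rho> / R"
  have q: "0 < q" "q < 1" using R \<rho> by (auto simp: q_def)
  have termb: "norm (a n * z ^ n) \<le> B * q ^ n" if "z \<in> ball 0 \<rho>" for z n
  proof -
    have nz: "norm z \<le> \<rho>" using that by auto
    have "norm (a n * z ^ n) = norm (a n) * norm z ^ n" by (simp add: norm_mult norm_power)
    also have "\<dots> \<le> norm (a n) * \<rho> ^ n"
      by (intro mult_left_mono power_mono nz) auto
    also have "\<dots> = norm (a n * of_real R ^ n) * q ^ n"
      using R \<rho> by (simp add: q_def norm_mult norm_power power_divide)
    also have "\<dots> \<le> B * q ^ n"
      using B(2)[of n] q by (intro mult_right_mono) auto
    finally show ?thesis .
  qed
  have psb: "norm (\<Sum>n<N. a n * z ^ n) \<le> B / (1 - q)" if "z \<in> ball 0 \<rho>" for z N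
  proof -
    have "norm (\<Sum>n<N. a n * z ^ n) \<le> (\<Sum>n<N. B * q ^ n)"
      by (intro sum_norm_le termb that)
    also have "\<dots> = B * (1 - q ^ N) / (1 - q)"
      using q by (simp add: sum_distrib_left[symmetric] sum_gp_strict)
    also have "\<dots> \<le> B / (1 - q)"
      using q B by (intro divide_right_mono) (auto simp: mult_le_cancel_left1 zero_le_power)
    finally show ?thesis .
  qed
  have "bounded (W ` {0..\<rho>})"
    using compact_imp_bounded[OF compact_continuous_image[OF continuous_on_subset[OF Wc] compact_Icc]] by auto
  then obtain Mw where Mw0: "\<forall>t\<in>{0..\<rho>}. \<bar>W t\<bar> \<le> Mw"
    by (auto simp: bounded_iff)
  then have Mw: "\<And>t. t \<in> {0..\<rho>} \<Longrightarrow> \<bar>W t\<bar> \<le> Mw" by auto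
  define s where "s N z = indicator (ball 0 \<rho>) z *\<^sub>R (complex_of_real (W (norm z)) * (\<Sum>n<N. a n * z ^ n))" for N z
  define f where "f z = indicator (ball 0 \<rho>) z *\<^sub>R (complex_of_real (W (norm z)) * F z)" for z
  define w where "w z = indicator (ball 0 \<rho>) z * (Mw * (B / (1 - q)))" for z :: complex
  have Wcn: "continuous_on UNIV (\<lambda>z::complex. complex_of_real (W (norm z)))"
    by (intro continuous_intros continuous_on_compose2[OF Wc]) auto
  have contF: "continuous_on (ball 0 \<rho>) F"
    by (rule continuous_on_subset[OF holomorphic_on_imp_continuous_on[OF holF]]) (use \<rho> in auto)
  have fm: "f \<in> borel_measurable lborel"
  proof -
    have "continuous_on (ball 0 \<rho>) (\<lambda>z. complex_of_real (W (norm z)) * F z)"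
      by (intro continuous_intros continuous_on_subset[OF Wcn] contF) auto
    from borel_measurable_continuous_on_indicator[OF _ this] show ?thesis
      unfolding f_def[abs_def] by simp
  qed
  have sint: "integrable lborel (\<lambda>z. indicator (ball 0 \<rho>) z *\<^sub>R (complex_of_real (W (norm z)) * z ^ n))" for n
    by (rule integrable_ball_cont) (intro continuous_intros Wcn)
  have sm: "s N \<in> borel_measurable lborel" for N
  proof -
    have "integrable lborel (s N)"
      unfolding s_def[abs_def] by (rule integrable_ball_cont) (intro continuous_intros Wcn)
    then show ?thesis by auto
  qed
  have wint: "integrable lborel w"
    unfolding w_def by (intro integrable_mult_left integrable_real_indicator emeasure_bounded_finite) auto
  have lim: "AE z in lborel. (\<lambda>N. s N z) \<longlonglongrightarrow> f z"
  proof (rule AE_I2)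
    fix z :: complex
    show "(\<lambda>N. s N z) \<longlonglongrightarrow> f z"
    proof (cases "z \<in> ball 0 \<rho>")
      case True
      then have "z \<in> ball 0 r" using \<rho> by auto
      from sums[OF this] have "(\<lambda>N. \<Sum>n<N. a n * z ^ n) \<longlonglongrightarrow> F z" by (simp add: sums_def)
      then show ?thesis using True unfolding s_def f_def by (intro tendsto_intros) auto
    next
      case False
      then show ?thesis unfolding s_def f_def by simp
    qed
  qed
  have bound: "AE z in lborel. norm (s N z) \<le> w z" for N
  proof (rule AE_I2)
    fix z :: complex
    show "norm (s N z) \<le> w z"
    proof (cases "z \<in> ball 0 \<rho>")
      case True
      have "norm (complex_of_real (W (norm z))) \<le> Mw" using Mw[of "norm z"] True by auto
      then have "norm (complex_of_real (W (norm z)) * (\<Sum>n<N. a n * z ^ n)) \<le> Mw * (B / (1 - q))"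
        unfolding norm_mult by (intro mult_mono psb True) auto
      then show ?thesis using True unfolding s_def w_def by simp
    next
      case False
      then show ?thesis unfolding s_def w_def by simp
    qed
  qed
  have conv: "(\<lambda>N. integral\<^sup>L lborel (s N)) \<longlonglongrightarrow> integral\<^sup>L lborel f"
    by (rule integral_dominated_convergence[OF fm sm wint lim bound])
  have sval: "integral\<^sup>L lborel (s (Suc N)) = F 0 * (LINT (z::complex)|lborel. indicator (ball 0 \<rho>) z *\<^sub>R complex_of_real (W (norm z)))" for N
  proof -
    have "integral\<^sup>L lborel (s (Suc N)) = (LINT z|lborel. (\<Sum>n<Suc N. a n * (indicator (ball 0 \<rho>) z *\<^sub>R (complex_of_real (W (norm z)) * z ^ n))))"
      unfolding s_def by (intro Bochner_Integration.integral_cong refl) (simp add: scaleR_conv_of_real sum_distrib_left mult_ac del: sum.lessThan_Suc)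
    also have "\<dots> = (\<Sum>n<Suc N. (LINT z|lborel. a n * (indicator (ball 0 \<rho>) z *\<^sub>R (complex_of_real (W (norm z)) * z ^ n))))"
      by (rule Bochner_Integration.integral_sum) (rule integrable_mult_right[OF sint])
    also have "\<dots> = (\<Sum>n<Suc N. a n * (LINT z|lborel. indicator (ball 0 \<rho>) z *\<^sub>R (complex_of_real (W (norm z)) * z ^ n)))"
      by (simp only: integral_mult_right_zero)
    also have "\<dots> = a 0 * (LINT z|lborel. indicator (ball 0 \<rho>) z *\<^sub>R (complex_of_real (W (norm z)) * z ^ 0))"
    proof -
      have Wm: "W \<in> borel_measurable borel" using Wc by (rule borel_measurable_continuous_onI)
      have "\<forall>i. (LINT z|lborel. indicator (ball 0 \<rho>) z *\<^sub>R (complex_of_real (W (norm z)) * z ^ Suc i)) = 0"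
        using vanish[OF _ Wm] by (simp del: power_Suc)
      then show ?thesis by (subst sum.lessThan_Suc_shift) (simp del: power_Suc)
    qed
    also have "\<dots> = F 0 * (LINT (z::complex)|lborel. indicator (ball 0 \<rho>) z *\<^sub>R complex_of_real (W (norm z)))"
      by (simp add: a_def)
    finally show ?thesis .
  qed
  have "(\<lambda>N. integral\<^sup>L lborel (s (Suc N))) \<longlonglongrightarrow> integral\<^sup>L lborel f"
    using conv by (rule LIMSEQ_Suc)
  then have "integral\<^sup>L lborel f = F 0 * (LINT (z::complex)|lborel. indicator (ball 0 \<rho>) z *\<^sub>R complex_of_real (W (norm z)))"
    unfolding sval by (simp add: LIMSEQ_const_iff)
  then show ?thesis by (simp add: f_def[abs_def])
qed



lemma integrable_ball_cont':
  fixes g :: "complex \<Rightarrow> 'b::{banach, second_countable_topology}"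
  assumes "continuous_on (cball c \<rho>) g"
  shows "integrable lborel (\<lambda>z. indicator (ball c \<rho>) z *\<^sub>R g z)"
proof (rule Bochner_Integration.integrable_bound[where f="\<lambda>z. indicator (cball c \<rho>) z *\<^sub>R g z"])
  show "integrable lborel (\<lambda>z. indicator (cball c \<rho>) z *\<^sub>R g z)"
    by (rule borel_integrable_compact) (auto intro: assms)
  show "(\<lambda>z. indicator (ball c \<rho>) z *\<^sub>R g z) \<in> borel_measurable lborel"
    using borel_measurable_continuous_on_indicator[of "ball c \<rho>" g] continuous_on_subset[OF assms]
    by auto
  show "AE x in lborel. norm (indicator (ball c \<rho>) x *\<^sub>R g x) \<le> norm (indicator (cball c \<rho>) x *\<^sub>R g x)"
    by (auto simp: indicator_def)
qed

lemma key_ineq: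
  fixes F :: "complex \<Rightarrow> complex" and W :: "real \<Rightarrow> real"
  assumes holF: "F holomorphic_on ball 0 r" and F0: "F 0 = 1" and \<rho>: "0 < \<rho>" "\<rho> < r"
    and Wc: "continuous_on UNIV W" and W0: "\<And>t. W t \<ge> 0"
  shows "(LINT z|lborel. indicator (ball 0 \<rho>) z * ((cmod (F z))\<^sup>2 * W (norm z)))
       \<ge> (LINT (z::complex)|lborel. indicator (ball 0 \<rho>) z * W (norm z))"
proof -
  have contF: "continuous_on (cball 0 \<rho>) F"
    by (rule continuous_on_subset[OF holomorphic_on_imp_continuous_on[OF holF]]) (use \<rho> in auto)
  have Wcn: "continuous_on UNIV (\<lambda>z::complex. W (norm z))"
    by (intro continuous_on_compose2[OF Wc] continuous_intros) auto
  have i1: "integrable lborel (\<lambda>z. indicator (ball 0 \<rho>) z * ((cmod (F z))\<^sup>2 * W (norm z)))"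
    using integrable_ball_cont'[of 0 \<rho> "\<lambda>z. (cmod (F z))\<^sup>2 * W (norm z)"]
    by (simp add: continuous_on_subset[OF Wcn] contF continuous_intros)
  have i2: "integrable lborel (\<lambda>z. indicator (ball 0 \<rho>) z * (W (norm z) * Re (F z)))"
    using integrable_ball_cont'[of 0 \<rho> "\<lambda>z. W (norm z) * Re (F z)"]
    by (simp add: continuous_on_subset[OF Wcn] contF continuous_intros)
  have i3: "integrable lborel (\<lambda>z::complex. indicator (ball 0 \<rho>) z * W (norm z))"
    using integrable_ball_cont'[of 0 \<rho> "\<lambda>z::complex. W (norm z)"]
    by (simp add: continuous_on_subset[OF Wcn])
  have MV: "(LINT z|lborel. indicator (ball 0 \<rho>) z *\<^sub>R (complex_of_real (W (norm z)) * F z))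
       = F 0 * (LINT (z::complex)|lborel. indicator (ball 0 \<rho>) z *\<^sub>R complex_of_real (W (norm z)))"
    by (rule mean_value_weighted[OF holF \<rho> Wc])
  have "(LINT z|lborel. indicator (ball 0 \<rho>) z * (W (norm z) * Re (F z)))
      = (LINT z|lborel. Re (indicator (ball 0 \<rho>) z *\<^sub>R (complex_of_real (W (norm z)) * F z)))"
    by (intro Bochner_Integration.integral_cong) (simp_all add: indicator_def)
  also have "\<dots> = Re (LINT z|lborel. indicator (ball 0 \<rho>) z *\<^sub>R (complex_of_real (W (norm z)) * F z))"
  proof (rule integral_Re)
    have "continuous_on UNIV (\<lambda>z::complex. complex_of_real (W (norm z)))"
      by (intro continuous_intros continuous_on_compose2[OF Wc]) auto
    then show "integrable lborel (\<lambda>z. indicator (ball 0 \<rho>) z *\<^sub>R (complex_of_real (W (norm z)) * F z))"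
      by (intro integrable_ball_cont' continuous_intros contF) (auto intro: continuous_on_subset)
  qed
  also have "\<dots> = (LINT (z::complex)|lborel. indicator (ball 0 \<rho>) z * W (norm z))"
  proof -
    have fe: "(\<lambda>z::complex. indicator (ball 0 \<rho>) z *\<^sub>R complex_of_real (W (norm z)))
        = (\<lambda>z. complex_of_real (indicator (ball 0 \<rho>) z * W (norm z)))"
      by (auto simp: fun_eq_iff indicator_def)
    show ?thesis unfolding MV F0 fe integral_complex_of_real by simp
  qed
  finally have eqRe: "(LINT z|lborel. indicator (ball 0 \<rho>) z * (W (norm z) * Re (F z)))
      = (LINT (z::complex)|lborel. indicator (ball 0 \<rho>) z * W (norm z))" .
  have "(LINT (z::complex)|lborel. indicator (ball 0 \<rho>) z * W (norm z))
      = (LINT z|lborel. 2 * (indicator (ball 0 \<rho>) z * (W (norm z) * Re (F z))) - indicator (ball 0 \<rho>) z * W (norm z))"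
    by (subst Bochner_Integration.integral_diff) (auto intro: i2 i3 simp: eqRe)
  also have "\<dots> \<le> (LINT z|lborel. indicator (ball 0 \<rho>) z * ((cmod (F z))\<^sup>2 * W (norm z)))"
  proof (rule integral_mono)
    show "integrable lborel (\<lambda>z. 2 * (indicator (ball 0 \<rho>) z * (W (norm z) * Re (F z))) - indicator (ball 0 \<rho>) z * W (norm z))"
      using i2 i3 by auto
    show "integrable lborel (\<lambda>z. indicator (ball 0 \<rho>) z * ((cmod (F z))\<^sup>2 * W (norm z)))" by (rule i1)
    fix z :: complex
    show "2 * (indicator (ball 0 \<rho>) z * (W (norm z) * Re (F z))) - indicator (ball 0 \<rho>) z * W (norm z)
        \<le> indicator (ball 0 \<rho>) z * ((cmod (F z))\<^sup>2 * W (norm z))"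
    proof -
      have "2 * Re (F z) - 1 \<le> (cmod (F z))\<^sup>2"
      proof -
        have "0 \<le> (Re (F z) - 1)^2" "0 \<le> (Im (F z))^2" by simp_all
        moreover have "(Re (F z) - 1)^2 = (Re (F z))^2 - 2 * Re (F z) + 1" by (simp add: power2_diff)
        ultimately show ?thesis using cmod_power2[of "F z"] by linarith
      qed
      then have "W (norm z) * (2 * Re (F z) - 1) \<le> W (norm z) * (cmod (F z))\<^sup>2"
        using W0 by (intro mult_left_mono) auto
      then show ?thesis by (auto simp: indicator_def algebra_simps)
    qed
  qed
  finally show ?thesis .
qed



lemma integral_affine_complex:
  fixes f :: "complex \<Rightarrow> real" and c :: real and t :: complex
  assumes c: "c \<noteq> 0" and f[measurable]: "f \<in> borel_measurable borel"
  shows "(LINT z|lborel. f z) = c\<^sup>2 * (LINT z|lborel. f (t + c *\<^sub>R z))"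
proof -
  have T[measurable]: "(\<lambda>x::complex. t + c *\<^sub>R x) \<in> borel_measurable borel" by measurable
  have "(LINT z|lborel. f z) = integral\<^sup>L (density (distr lborel borel (\<lambda>x::complex. t + c *\<^sub>R x)) (\<lambda>_. \<bar>c\<bar>^DIM(complex))) f"
    using lborel_affine[OF c, of t] by simp
  also have "\<dots> = integral\<^sup>L (distr lborel borel (\<lambda>x::complex. t + c *\<^sub>R x)) (\<lambda>x. \<bar>c\<bar>^DIM(complex) *\<^sub>R f x)"
    by (rule integral_density) auto
  also have "\<dots> = (LINT z|lborel. \<bar>c\<bar>^DIM(complex) *\<^sub>R f (t + c *\<^sub>R z))"
    by (rule integral_distr) auto
  also have "\<dots> = c\<^sup>2 * (LINT z|lborel. f (t + c *\<^sub>R z))"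
    by simp
  finally show ?thesis .
qed

lemma measure_ball_complex: "s \<ge> 0 \<Longrightarrow> measure lborel (ball (c::complex) s) = pi * s\<^sup>2"
  using content_ball[of s c] by (simp add: unit_ball_vol_2)

lemma integral_ind_ball: "s \<ge> 0 \<Longrightarrow> (LINT z|lborel. indicator (ball (c::complex) s) z) = pi * s\<^sup>2"
proof -
  assume s: "s \<ge> 0"
  have "integral\<^sup>L lborel (indicator (ball c s) :: complex \<Rightarrow> real) = measure lborel (ball c s)"
    by simp
  then show ?thesis using measure_ball_complex[OF s] by simp
qed

definition J :: "real \<Rightarrow> real" where
  "J s = (LINT z|lborel. indicator (ball (0::complex) s) z * (norm z)\<^sup>2)"

lemma J_int: "integrable lborel (\<lambda>z. indicator (ball (0::complex) s) z * (norm z)\<^sup>2)"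
  using integrable_ball_cont'[of 0 s "\<lambda>z::complex. (norm z)\<^sup>2"] by (simp add: continuous_intros)

lemma ind_int: "integrable lborel (\<lambda>z. indicator (ball (0::complex) s) z :: real)"
  by (intro integrable_real_indicator emeasure_bounded_finite) auto

lemma J_meas: "(\<lambda>z. indicator (ball (0::complex) s) z * (norm z)\<^sup>2) \<in> borel_measurable borel"
  using borel_measurable_integrable[OF J_int[of s]] by simp

lemma J_scale: assumes "s > 0" shows "J s = s^4 * J 1"
proof -
  have "J s = s\<^sup>2 * (LINT z|lborel. indicator (ball (0::complex) s) (0 + s *\<^sub>R z) * (norm (0 + s *\<^sub>R z))\<^sup>2)"
    unfolding J_def by (rule integral_affine_complex[OF _ J_meas]) (use assms in auto)
  also have "(\<lambda>z::complex. indicator (ball (0::complex) s) (0 + s *\<^sub>R z) * (norm (0 + s *\<^sub>R z))\<^sup>2)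
       = (\<lambda>z. s\<^sup>2 * (indicator (ball (0::complex) 1) z * (norm z)\<^sup>2))"
    using assms by (auto simp: fun_eq_iff indicator_def power_mult_distrib)
  finally show ?thesis unfolding J_def by (simp add: power_mult_distrib)
qed

lemma J_bounds:
  assumes s: "0 < s" "s < 1"
  shows "s\<^sup>2 * (pi - pi * s\<^sup>2) \<le> J 1 - J s" "J 1 - J s \<le> pi - pi * s\<^sup>2"
proof -
  have sub: "ball (0::complex) s \<subseteq> ball 0 1" using s by auto
  have eqd: "J 1 - J s = (LINT z|lborel. (indicator (ball (0::complex) 1) z - indicator (ball 0 s) z) * (norm z)\<^sup>2)"
    unfolding J_def by (subst Bochner_Integration.integral_diff[symmetric]) (auto intro: J_int simp: algebra_simps)
  have mi: "(LINT z|lborel. (indicator (ball (0::complex) 1) z - indicator (ball 0 s) z) :: real) = pi - pi * s\<^sup>2"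
    using s by (subst Bochner_Integration.integral_diff) (auto intro: ind_int simp: integral_ind_ball content_ball unit_ball_vol_2)
  have i1: "integrable lborel (\<lambda>z. (indicator (ball (0::complex) 1) z - indicator (ball 0 s) z) * (norm z)\<^sup>2)"
    using J_int[of 1] J_int[of s] by (auto simp: algebra_simps)
  have i2: "integrable lborel (\<lambda>z. (indicator (ball (0::complex) 1) z - indicator (ball 0 s) z) :: real)"
    using ind_int[of 1] ind_int[of s] by auto
  have "s\<^sup>2 * (pi - pi * s\<^sup>2) = (LINT z|lborel. s\<^sup>2 * (indicator (ball (0::complex) 1) z - indicator (ball 0 s) z))"
    by (simp add: mi)
  also have "\<dots> \<le> J 1 - J s" unfolding eqd
  proof (rule integral_mono)
    show "integrable lborel (\<lambda>z. s\<^sup>2 * (indicator (ball (0::complex) 1) z - indicator (ball 0 s) z))"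
      using i2 by auto
    show "integrable lborel (\<lambda>z. (indicator (ball (0::complex) 1) z - indicator (ball 0 s) z) * (norm z)\<^sup>2)"
      by (rule i1)
    fix z :: complex
    show "s\<^sup>2 * (indicator (ball 0 1) z - indicator (ball 0 s) z) \<le> (indicator (ball 0 1) z - indicator (ball 0 s) z) * (norm z)\<^sup>2"
      using s by (auto simp: indicator_def intro!: power_mono)
  qed
  finally show "s\<^sup>2 * (pi - pi * s\<^sup>2) \<le> J 1 - J s" .
  have "J 1 - J s \<le> (LINT z|lborel. (indicator (ball (0::complex) 1) z - indicator (ball 0 s) z) :: real)"
    unfolding eqd
  proof (rule integral_mono)
    show "integrable lborel (\<lambda>z. (indicator (ball (0::complex) 1) z - indicator (ball 0 s) z) * (norm z)\<^sup>2)"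
      by (rule i1)
    show "integrable lborel (\<lambda>z. (indicator (ball (0::complex) 1) z - indicator (ball 0 s) z) :: real)"
      by (rule i2)
    fix z :: complex
    show "(indicator (ball 0 1) z - indicator (ball 0 s) z) * (norm z)\<^sup>2 \<le> (indicator (ball 0 1) z - indicator (ball 0 s) z :: real)"
      using s by (auto simp: indicator_def abs_square_le_1)
  qed
  then show "J 1 - J s \<le> pi - pi * s\<^sup>2" by (simp add: mi)
qed



lemma J_tb: assumes "0 < t" "t < 1" shows "t * pi \<le> J 1 * (1 + t)" "J 1 * (1 + t) \<le> pi"
proof -
  define s where "s = sqrt t"
  have s: "0 < s" "s < 1" "s\<^sup>2 = t" using assms by (auto simp: s_def real_sqrt_less_iff)
  have s4: "s^4 = t\<^sup>2" using s(3) by (metis power2_eq_square power_mult numeral_Bit0 numeral_One mult_2)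
  note b = J_bounds[OF s(1,2)]
  have Js: "J s = t\<^sup>2 * J 1" using J_scale[OF s(1)] s4 by simp
  have pos: "0 < 1 - t" using assms by simp
  have "t * (pi - pi * t) \<le> J 1 - t\<^sup>2 * J 1" using b(1) Js s(3) by simp
  then have "(1 - t) * (t * pi) \<le> (1 - t) * (J 1 * (1 + t))" by (simp add: algebra_simps power2_eq_square)
  then show "t * pi \<le> J 1 * (1 + t)" using pos by simp
  have "J 1 - t\<^sup>2 * J 1 \<le> pi - pi * t" using b(2) Js s(3) by simp
  then have "(1 - t) * (J 1 * (1 + t)) \<le> (1 - t) * pi" by (simp add: algebra_simps power2_eq_square)
  then show "J 1 * (1 + t) \<le> pi" using pos by simp
qed

lemma J1: "J 1 = pi / 2"
proof (rule ccontr)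
  assume ne: "J 1 \<noteq> pi / 2"
  show False
  proof (cases "J 1 > pi / 2")
    case True
    define t where "t = pi / (2 * J 1)"
    have Jp: "J 1 > 0" using True pi_gt_zero by linarith
    have t: "0 < t" "t < 1" using True Jp by (auto simp: t_def field_simps)
    have "J 1 * (1 + t) = J 1 + pi / 2" using Jp by (simp add: t_def field_simps)
    with J_tb(2)[OF t] True show False by simp
  next
    case False
    then have lt: "J 1 < pi / 2" using ne by simp
    define q where "q = J 1 / (pi - J 1)"
    define t where "t = (1 + max 0 q) / 2"
    have pJ: "pi - J 1 > 0" using lt pi_gt_zero by linarith
    have q: "q < 1" using lt pJ by (simp add: q_def field_simps)
    have t: "0 < t" "t < 1" using q by (auto simp: t_def)
    have "q \<le> max 0 q" "max 0 q < 1" using q by auto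
    then have "q < t" unfolding t_def by (auto simp: max_def)
    then have "J 1 / (pi - J 1) < t" by (simp add: q_def)
    then have "J 1 < t * (pi - J 1)" using pJ by (simp add: field_simps)
    then have "J 1 * (1 + t) < t * pi" by (simp add: algebra_simps)
    with J_tb(1)[OF t] show False by simp
  qed
qed

lemma J_val: "s > 0 \<Longrightarrow> J s = pi / 2 * s^4"
  using J_scale[of s] J1 by simp

lemma weight_lb:
  assumes s: "s > 0"
  shows "(LINT z|lborel. indicator (ball (0::complex) s) z * exp (- k * (norm z)\<^sup>2)) \<ge> pi * s\<^sup>2 - k * pi * s^4 / 2"
proof -
  have "pi * s\<^sup>2 - k * pi * s^4 / 2 = (LINT z|lborel. indicator (ball (0::complex) s) z) - k * J s"
    using s by (simp add: integral_ind_ball J_val content_ball unit_ball_vol_2)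
  also have "\<dots> = (LINT z|lborel. indicator (ball (0::complex) s) z - k * (indicator (ball (0::complex) s) z * (norm z)\<^sup>2))"
    unfolding J_def by (subst Bochner_Integration.integral_diff) (auto intro: ind_int J_int)
  also have "\<dots> \<le> (LINT z|lborel. indicator (ball (0::complex) s) z * exp (- k * (norm z)\<^sup>2))"
  proof (rule integral_mono)
    show "integrable lborel (\<lambda>z. indicator (ball (0::complex) s) z - k * (indicator (ball (0::complex) s) z * (norm z)\<^sup>2))"
      using ind_int J_int by auto
    show "integrable lborel (\<lambda>z. indicator (ball (0::complex) s) z * exp (- k * (norm z)\<^sup>2))"
      using integrable_ball_cont'[of 0 s "\<lambda>z::complex. exp (- k * (norm z)\<^sup>2)"] by (simp add: continuous_intros)
    fix z :: complex
    have "1 + (- k * (norm z)\<^sup>2) \<le> exp (- k * (norm z)\<^sup>2)" by (rule exp_ge_add_one_self)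
    then show "indicator (ball 0 s) z - k * (indicator (ball 0 s) z * (norm z)\<^sup>2) \<le> indicator (ball 0 s) z * exp (- k * (norm z)\<^sup>2)"
      by (auto simp: indicator_def)
  qed
  finally show ?thesis .
qed



lemma sm_dx:
  assumes sm: "smooth_on \<Omega> \<phi>" and p: "p \<in> \<Omega>"
  shows "((\<lambda>t. iter_pd w \<phi> (p + of_real t)) has_real_derivative iter_pd (True # w) \<phi> p) (at 0)"
proof -
  have "(\<lambda>t::real. iter_pd w \<phi> (p + of_real t)) differentiable (at 0)"
    using sm p unfolding smooth_on_def by blast
  then show ?thesis
    by (simp add: DERIV_deriv_iff_real_differentiable[symmetric] pdx_def)
qed

lemma sm_dy:
  assumes sm: "smooth_on \<Omega> \<phi>" and p: "p \<in> \<Omega>"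
  shows "((\<lambda>t. iter_pd w \<phi> (p + \<i> * of_real t)) has_real_derivative iter_pd (False # w) \<phi> p) (at 0)"
proof -
  have "(\<lambda>t::real. iter_pd w \<phi> (p + \<i> * of_real t)) differentiable (at 0)"
    using sm p unfolding smooth_on_def by blast
  then show ?thesis
    by (simp add: DERIV_deriv_iff_real_differentiable[symmetric] pdy_def)
qed

lemma sm_dx_at:
  assumes sm: "smooth_on \<Omega> \<phi>" and p: "q + of_real t0 \<in> \<Omega>"
  shows "((\<lambda>t. iter_pd w \<phi> (q + of_real t)) has_real_derivative iter_pd (True # w) \<phi> (q + of_real t0)) (at t0)"
proof -
  have "((\<lambda>s. iter_pd w \<phi> ((q + of_real t0) + of_real s)) has_real_derivative iter_pd (True # w) \<phi> (q + of_real t0)) (at 0)"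
    by (rule sm_dx[OF sm p])
  then have "((\<lambda>s. (\<lambda>t. iter_pd w \<phi> (q + of_real t)) (s + t0)) has_real_derivative iter_pd (True # w) \<phi> (q + of_real t0)) (at 0)"
    by (simp add: algebra_simps)
  then show ?thesis using DERIV_shift[of "\<lambda>t. iter_pd w \<phi> (q + of_real t)" _ 0 t0] by simp
qed

lemma sm_dy_at:
  assumes sm: "smooth_on \<Omega> \<phi>" and p: "q + \<i> * of_real t0 \<in> \<Omega>"
  shows "((\<lambda>t. iter_pd w \<phi> (q + \<i> * of_real t)) has_real_derivative iter_pd (False # w) \<phi> (q + \<i> * of_real t0)) (at t0)"
proof -
  have "((\<lambda>s. iter_pd w \<phi> ((q + \<i> * of_real t0) + \<i> * of_real s)) has_real_derivative iter_pd (False # w) \<phi> (q + \<i> * of_real t0)) (at 0)"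
    by (rule sm_dy[OF sm p])
  then have "((\<lambda>s. (\<lambda>t. iter_pd w \<phi> (q + \<i> * of_real t)) (s + t0)) has_real_derivative iter_pd (False # w) \<phi> (q + \<i> * of_real t0)) (at 0)"
    by (simp add: algebra_simps)
  then show ?thesis using DERIV_shift[of "\<lambda>t. iter_pd w \<phi> (q + \<i> * of_real t)" _ 0 t0] by simp
qed



lemma taylor_x:
  assumes sm: "smooth_on \<Omega> \<phi>" and dom: "\<And>t. \<bar>t\<bar> \<le> \<bar>u\<bar> \<Longrightarrow> q + of_real t \<in> \<Omega>"
  shows "\<exists>\<tau>. \<bar>\<tau>\<bar> \<le> \<bar>u\<bar> \<and> iter_pd w0 \<phi> (q + of_real u) =
     (\<Sum>m<n. iter_pd (replicate m True @ w0) \<phi> q / fact m * u ^ m) + iter_pd (replicate n True @ w0) \<phi> (q + of_real \<tau>) / fact n * u ^ n"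
proof -
  have "\<exists>\<tau>. \<bar>\<tau>\<bar> \<le> \<bar>u\<bar> \<and> (\<lambda>t. iter_pd w0 \<phi> (q + of_real t)) u =
     (\<Sum>m<n. (\<lambda>m t. iter_pd (replicate m True @ w0) \<phi> (q + of_real t)) m 0 / fact m * u ^ m) + (\<lambda>m t. iter_pd (replicate m True @ w0) \<phi> (q + of_real t)) n \<tau> / fact n * u ^ n"
  proof (rule Maclaurin_bi_le)
    show "(\<lambda>m t. iter_pd (replicate m True @ w0) \<phi> (q + of_real t)) 0 = (\<lambda>t. iter_pd w0 \<phi> (q + of_real t))" by simp
    show "\<forall>m t. m < n \<and> \<bar>t\<bar> \<le> \<bar>u\<bar> \<longrightarrow> ((\<lambda>m t. iter_pd (replicate m True @ w0) \<phi> (q + of_real t)) m has_real_derivative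
           (\<lambda>m t. iter_pd (replicate m True @ w0) \<phi> (q + of_real t)) (Suc m) t) (at t)"
      using sm_dx_at[OF sm dom] by simp
  qed
  then show ?thesis by simp
qed

lemma taylor_y:
  assumes sm: "smooth_on \<Omega> \<phi>" and dom: "\<And>t. \<bar>t\<bar> \<le> \<bar>v\<bar> \<Longrightarrow> q + \<i> * of_real t \<in> \<Omega>"
  shows "\<exists>\<sigma>. \<bar>\<sigma>\<bar> \<le> \<bar>v\<bar> \<and> iter_pd w0 \<phi> (q + \<i> * of_real v) =
     (\<Sum>m<n. iter_pd (replicate m False @ w0) \<phi> q / fact m * v ^ m) + iter_pd (replicate n False @ w0) \<phi> (q + \<i> * of_real \<sigma>) / fact n * v ^ n"
proof -
  have "\<exists>\<sigma>. \<bar>\<sigma>\<bar> \<le> \<bar>v\<bar> \<and> (\<lambda>t. iter_pd w0 \<phi> (q + \<i> * of_real t)) v =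
     (\<Sum>m<n. (\<lambda>m t. iter_pd (replicate m False @ w0) \<phi> (q + \<i> * of_real t)) m 0 / fact m * v ^ m) + (\<lambda>m t. iter_pd (replicate m False @ w0) \<phi> (q + \<i> * of_real t)) n \<sigma> / fact n * v ^ n"
  proof (rule Maclaurin_bi_le)
    show "(\<lambda>m t. iter_pd (replicate m False @ w0) \<phi> (q + \<i> * of_real t)) 0 = (\<lambda>t. iter_pd w0 \<phi> (q + \<i> * of_real t))" by simp
    show "\<forall>m t. m < n \<and> \<bar>t\<bar> \<le> \<bar>v\<bar> \<longrightarrow> ((\<lambda>m t. iter_pd (replicate m False @ w0) \<phi> (q + \<i> * of_real t)) m has_real_derivative
           (\<lambda>m t. iter_pd (replicate m False @ w0) \<phi> (q + \<i> * of_real t)) (Suc m) t) (at t)"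
      using sm_dy_at[OF sm dom] by simp
  qed
  then show ?thesis by simp
qed



lemma arith_bd:
  fixes u v e1 e2 e3 \<epsilon> A B D :: real
  assumes "\<bar>e1\<bar> \<le> \<epsilon>" "\<bar>e2\<bar> \<le> \<epsilon>" "\<bar>e3\<bar> \<le> \<epsilon>"
  shows "(A + e1) / 2 * u\<^sup>2 + (B + e2) * u * v + (D + e3) / 2 * v\<^sup>2 \<le> A / 2 * u\<^sup>2 + B * u * v + D / 2 * v\<^sup>2 + \<epsilon> * (u\<^sup>2 + v\<^sup>2)"
proof -
  have uv: "\<bar>u * v\<bar> \<le> (u\<^sup>2 + v\<^sup>2) / 2"
    using sum_squares_bound[of u v] sum_squares_bound[of u "-v"] by (simp add: abs_if)
  have 1: "e1 * u\<^sup>2 \<le> \<epsilon> * u\<^sup>2" using assms(1) by (intro mult_right_mono) auto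
  have 3: "e3 * v\<^sup>2 \<le> \<epsilon> * v\<^sup>2" using assms(3) by (intro mult_right_mono) auto
  have "e2 * (u * v) \<le> \<bar>e2\<bar> * \<bar>u * v\<bar>" by (metis abs_ge_self abs_mult)
  also have "\<dots> \<le> \<epsilon> * ((u\<^sup>2 + v\<^sup>2) / 2)" using assms(2) uv by (intro mult_mono) auto
  finally have 2: "e2 * (u * v) \<le> \<epsilon> * ((u\<^sup>2 + v\<^sup>2) / 2)" .
  have "(A + e1) / 2 * u\<^sup>2 + (B + e2) * u * v + (D + e3) / 2 * v\<^sup>2 = A / 2 * u\<^sup>2 + B * u * v + D / 2 * v\<^sup>2 + (e1 * u\<^sup>2 / 2 + e2 * (u * v) + e3 * v\<^sup>2 / 2)"
    by (simp add: field_simps)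
  also have "\<dots> \<le> A / 2 * u\<^sup>2 + B * u * v + D / 2 * v\<^sup>2 + (\<epsilon> * u\<^sup>2 / 2 + \<epsilon> * ((u\<^sup>2 + v\<^sup>2) / 2) + \<epsilon> * v\<^sup>2 / 2)"
    using 1 2 3 by (intro add_left_mono add_mono divide_right_mono) auto
  also have "\<dots> = A / 2 * u\<^sup>2 + B * u * v + D / 2 * v\<^sup>2 + \<epsilon> * (u\<^sup>2 + v\<^sup>2)"
    by (simp add: field_simps)
  finally show ?thesis .
qed

lemma cont_eps:
  assumes "continuous_on \<Omega> f" "a \<in> \<Omega>" "\<epsilon> > 0"
  shows "\<exists>d>0. \<forall>p\<in>\<Omega>. dist p a < d \<longrightarrow> \<bar>f p - f a\<bar> < (\<epsilon>::real)"
  using assms unfolding continuous_on_iff by (auto simp: dist_real_def)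

lemma taylor_bound:
  assumes op: "open \<Omega>" and sm: "smooth_on \<Omega> \<phi>" and a: "a \<in> \<Omega>" and \<epsilon>: "\<epsilon> > 0"
  shows "\<exists>\<delta>>0. ball a \<delta> \<subseteq> \<Omega> \<and> (\<forall>z. norm z < \<delta> \<longrightarrow>
     \<phi> (a + z) \<le> \<phi> a + pdx \<phi> a * Re z + pdy \<phi> a * Im z
        + pdx (pdx \<phi>) a / 2 * (Re z)\<^sup>2 + pdx (pdy \<phi>) a * Re z * Im z + pdy (pdy \<phi>) a / 2 * (Im z)\<^sup>2
        + \<epsilon> * (norm z)\<^sup>2)"
proof -
  have cont: "continuous_on \<Omega> (iter_pd w \<phi>)" for w using sm unfolding smooth_on_def by blast
  obtain d0 where d0: "d0 > 0" "ball a d0 \<subseteq> \<Omega>" using op a open_contains_ball by blast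
  obtain d1 where d1: "d1 > 0" "\<And>p. p \<in> \<Omega> \<Longrightarrow> dist p a < d1 \<Longrightarrow> \<bar>iter_pd [True,True] \<phi> p - iter_pd [True,True] \<phi> a\<bar> < \<epsilon>"
    using cont_eps[OF cont a \<epsilon>] by blast
  obtain d2 where d2: "d2 > 0" "\<And>p. p \<in> \<Omega> \<Longrightarrow> dist p a < d2 \<Longrightarrow> \<bar>iter_pd [True,False] \<phi> p - iter_pd [True,False] \<phi> a\<bar> < \<epsilon>"
    using cont_eps[OF cont a \<epsilon>] by blast
  obtain d3 where d3: "d3 > 0" "\<And>p. p \<in> \<Omega> \<Longrightarrow> dist p a < d3 \<Longrightarrow> \<bar>iter_pd [False,False] \<phi> p - iter_pd [False,False] \<phi> a\<bar> < \<epsilon>"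
    using cont_eps[OF cont a \<epsilon>] by blast
  define \<delta> where "\<delta> = min d0 (min d1 (min d2 d3))"
  have \<delta>: "\<delta> > 0" "ball a \<delta> \<subseteq> \<Omega>" using d0 d1 d2 d3 by (auto simp: \<delta>_def)
  have inb: "a + w \<in> \<Omega>" "dist (a + w) a < d1" "dist (a + w) a < d2" "dist (a + w) a < d3" if "norm w < \<delta>" for w
    using that \<delta>(2) by (auto simp: \<delta>_def dist_norm)
  show ?thesis
  proof (intro exI[of _ \<delta>] conjI allI impI \<delta>)
    fix z :: complex assume z: "norm z < \<delta>"
    define u where "u = Re z"
    define v where "v = Im z"
    have zuv: "z = of_real u + \<i> * of_real v" by (simp add: u_def v_def complex_eq)
    have nz: "(norm z)\<^sup>2 = u\<^sup>2 + v\<^sup>2" by (simp add: u_def v_def cmod_power2)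
    have hu: "\<bar>t\<bar> \<le> \<bar>u\<bar> \<Longrightarrow> norm (of_real t :: complex) < \<delta>" for t
      using z abs_Re_le_cmod[of z] by (simp add: u_def)
    have hv: "\<bar>t\<bar> \<le> \<bar>v\<bar> \<Longrightarrow> norm (of_real u + \<i> * of_real t) < \<delta>" for t
    proof -
      assume t: "\<bar>t\<bar> \<le> \<bar>v\<bar>"
      have "(norm (of_real u + \<i> * of_real t))\<^sup>2 = u\<^sup>2 + t\<^sup>2" by (simp add: cmod_power2)
      also have "\<dots> \<le> u\<^sup>2 + v\<^sup>2" using t by (simp add: abs_le_square_iff)
      also have "\<dots> = (norm z)\<^sup>2" by (rule nz[symmetric])
      finally have "norm (of_real u + \<i> * of_real t) \<le> norm z"
        by (simp add: power2_le_iff_abs_le)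
      then show ?thesis using z by simp
    qed
    obtain \<sigma> where \<sigma>: "\<bar>\<sigma>\<bar> \<le> \<bar>v\<bar>" and ey: "iter_pd [] \<phi> ((a + of_real u) + \<i> * of_real v) =
       (\<Sum>m<2. iter_pd (replicate m False @ []) \<phi> (a + of_real u) / fact m * v ^ m)
        + iter_pd (replicate 2 False @ []) \<phi> ((a + of_real u) + \<i> * of_real \<sigma>) / fact 2 * v ^ 2"
      using taylor_y[OF sm, of v "a + of_real u" "[]" 2] inb(1)[OF hv] by (auto simp: add.assoc)
    obtain \<tau>1 where \<tau>1: "\<bar>\<tau>1\<bar> \<le> \<bar>u\<bar>" and ex: "iter_pd [] \<phi> (a + of_real u) =
       (\<Sum>m<2. iter_pd (replicate m True @ []) \<phi> a / fact m * u ^ m)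
        + iter_pd (replicate 2 True @ []) \<phi> (a + of_real \<tau>1) / fact 2 * u ^ 2"
      using taylor_x[OF sm, of u a "[]" 2] inb(1)[OF hu] by auto
    obtain \<tau>2 where \<tau>2: "\<bar>\<tau>2\<bar> \<le> \<bar>u\<bar>" and exy: "iter_pd [False] \<phi> (a + of_real u) =
       (\<Sum>m<1. iter_pd (replicate m True @ [False]) \<phi> a / fact m * u ^ m)
        + iter_pd (replicate 1 True @ [False]) \<phi> (a + of_real \<tau>2) / fact 1 * u ^ 1"
      using taylor_x[OF sm, of u a "[False]" 1] inb(1)[OF hu] by auto
    define e1 where "e1 = iter_pd [True,True] \<phi> (a + of_real \<tau>1) - iter_pd [True,True] \<phi> a"
    define e2 where "e2 = iter_pd [True,False] \<phi> (a + of_real \<tau>2) - iter_pd [True,False] \<phi> a"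
    define e3 where "e3 = iter_pd [False,False] \<phi> (a + (of_real u + \<i> * of_real \<sigma>)) - iter_pd [False,False] \<phi> a"
    have e1: "\<bar>e1\<bar> \<le> \<epsilon>" unfolding e1_def using d1(2)[OF inb(1,2)[OF hu[OF \<tau>1]]] by simp
    have e2: "\<bar>e2\<bar> \<le> \<epsilon>" unfolding e2_def using d2(2)[OF inb(1,3)[OF hu[OF \<tau>2]]] by simp
    have e3: "\<bar>e3\<bar> \<le> \<epsilon>" unfolding e3_def using d3(2)[OF inb(1,4)[OF hv[OF \<sigma>]]] by simp
    have "\<phi> (a + z) = \<phi> a + pdx \<phi> a * u + pdy \<phi> a * v
        + (pdx (pdx \<phi>) a + e1) / 2 * u\<^sup>2 + (pdx (pdy \<phi>) a + e2) * u * v + (pdy (pdy \<phi>) a + e3) / 2 * v\<^sup>2"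
      using ey ex exy unfolding zuv e1_def e2_def e3_def
      by (simp add: numeral_2_eq_2 add.assoc algebra_simps)
    also have "\<dots> \<le> \<phi> a + pdx \<phi> a * u + pdy \<phi> a * v
        + (pdx (pdx \<phi>) a / 2 * u\<^sup>2 + pdx (pdy \<phi>) a * u * v + pdy (pdy \<phi>) a / 2 * v\<^sup>2 + \<epsilon> * (u\<^sup>2 + v\<^sup>2))"
      using arith_bd[OF e1 e2 e3, of "pdx (pdx \<phi>) a" u "pdx (pdy \<phi>) a" v "pdy (pdy \<phi>) a"] by simp
    finally show "\<phi> (a + z) \<le> \<phi> a + pdx \<phi> a * Re z + pdy \<phi> a * Im z
        + pdx (pdx \<phi>) a / 2 * (Re z)\<^sup>2 + pdx (pdy \<phi>) a * Re z * Im z + pdy (pdy \<phi>) a / 2 * (Im z)\<^sup>2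
        + \<epsilon> * (norm z)\<^sup>2"
      unfolding nz by (simp add: u_def v_def)
  qed
qed



lemma cont_phi: "smooth_on \<Omega> \<phi> \<Longrightarrow> continuous_on \<Omega> \<phi>"
  unfolding smooth_on_def using iter_pd.simps(1) by metis

lemma norm_F_sq:
  "(cmod (w * exp (- (h / 2))))\<^sup>2 = (cmod w)\<^sup>2 * exp (- Re h)"
proof -
  have "(cmod (exp (- (h / 2))))\<^sup>2 = exp (- Re h)"
    by (simp add: norm_exp_eq_Re power2_eq_square exp_add[symmetric])
  then show ?thesis by (simp add: norm_mult power_mult_distrib)
qed

lemma f_lower_rho:
  fixes f :: "complex \<Rightarrow> complex" and \<phi> :: "complex \<Rightarrow> real"
  assumes sm: "smooth_on \<Omega> \<phi>" and \<delta>: "ball a \<delta> \<subseteq> \<Omega>"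
    and tay: "\<And>u. norm u < \<delta> \<Longrightarrow> \<phi> (a + u) \<le> \<phi> a + Re (\<beta> * u + \<alpha> * u\<^sup>2) + k * (norm u)\<^sup>2"
    and r: "0 < r" "r \<le> \<delta>" and \<rho>: "0 < \<rho>" "\<rho> < r"
    and holf: "f holomorphic_on ball a r" and fa: "f a = 1"
    and intf: "integrable lborel (\<lambda>z. indicator (ball a r) z *\<^sub>R ((cmod (f z))\<^sup>2 * exp (- \<phi> z)))"
  shows "(LINT z|lborel. indicator (ball a r) z *\<^sub>R ((cmod (f z))\<^sup>2 * exp (- \<phi> z)))
      \<ge> exp (- \<phi> a) * (pi * \<rho>\<^sup>2 - k * pi * \<rho>^4 / 2)"
proof -
  define h where "h u = \<beta> * u + \<alpha> * u\<^sup>2" for u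
  define F where "F u = f (a + u) * exp (- (h u / 2))" for u
  have holF: "F holomorphic_on ball 0 r"
  proof -
    have "(\<lambda>u. f (a + u)) holomorphic_on ball 0 r"
    proof (rule holomorphic_on_compose_gen[of "\<lambda>u. a + u" _ f "ball a r", unfolded o_def])
      show "(+) a holomorphic_on ball 0 r" by (intro holomorphic_intros)
      show "f holomorphic_on ball a r" by (rule holf)
      show "(+) a ` ball 0 r \<subseteq> ball a r" by (auto simp: dist_norm)
    qed
    then show ?thesis unfolding F_def h_def by (intro holomorphic_intros) auto
  qed
  have F0: "F 0 = 1" by (simp add: F_def h_def fa)
  have contphi: "continuous_on \<Omega> \<phi>" by (rule cont_phi[OF sm])
  have contFc: "continuous_on (cball 0 \<rho>) F"
    by (rule continuous_on_subset[OF holomorphic_on_imp_continuous_on[OF holF]]) (use \<rho> in auto)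
  define G where "G u = (cmod (F u))\<^sup>2 * exp (- k * (norm u)\<^sup>2)" for u
  define low where "low z = indicator (ball a \<rho>) z *\<^sub>R (exp (- \<phi> a) * G (z - a))" for z
  have contlow: "continuous_on (cball a \<rho>) (\<lambda>z. exp (- \<phi> a) * G (z - a))"
  proof -
    have "continuous_on (cball a \<rho>) (\<lambda>z. F (z - a))"
      by (rule continuous_on_compose2[OF contFc]) (auto intro!: continuous_intros simp: dist_norm norm_minus_commute)
    then show ?thesis unfolding G_def by (intro continuous_intros)
  qed
  have intlow: "integrable lborel low"
    unfolding low_def[abs_def] by (rule integrable_ball_cont'[OF contlow])
  have step1: "(LINT z|lborel. low z) \<le> (LINT z|lborel. indicator (ball a r) z *\<^sub>R ((cmod (f z))\<^sup>2 * exp (- \<phi> z)))"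
  proof (rule integral_mono[OF intlow intf])
    fix z :: complex
    show "low z \<le> indicator (ball a r) z *\<^sub>R ((cmod (f z))\<^sup>2 * exp (- \<phi> z))"
    proof (cases "z \<in> ball a \<rho>")
      case True
      define u where "u = z - a"
      have zu: "z = a + u" by (simp add: u_def)
      have nu: "norm u < \<delta>" using True \<rho> r by (simp add: u_def dist_norm norm_minus_commute)
      have zr: "z \<in> ball a r" using True \<rho> by auto
      have "\<phi> z \<le> \<phi> a + Re (h u) + k * (norm u)\<^sup>2" using tay[OF nu] by (simp add: zu h_def)
      then have "exp (- \<phi> a) * exp (- Re (h u)) * exp (- k * (norm u)\<^sup>2) \<le> exp (- \<phi> z)"
        by (simp add: exp_add[symmetric])
      then have "(cmod (f z))\<^sup>2 * (exp (- \<phi> a) * exp (- Re (h u)) * exp (- k * (norm u)\<^sup>2)) \<le> (cmod (f z))\<^sup>2 * exp (- \<phi> z)"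
        by (intro mult_left_mono) auto
      moreover have "exp (- \<phi> a) * G u = (cmod (f z))\<^sup>2 * (exp (- \<phi> a) * exp (- Re (h u)) * exp (- k * (norm u)\<^sup>2))"
        unfolding G_def F_def norm_F_sq by (simp add: zu mult_ac)
      ultimately show ?thesis using True zr by (simp add: low_def u_def mult_ac)
    next
      case False
      then show ?thesis by (simp add: low_def indicator_def)
    qed
  qed
  have mlow: "low \<in> borel_measurable borel"
    using borel_measurable_integrable[OF intlow] by simp
  have step2: "(LINT z|lborel. low z) = exp (- \<phi> a) * (LINT u|lborel. indicator (ball 0 \<rho>) u * ((cmod (F u))\<^sup>2 * exp (- k * (norm u)\<^sup>2)))"
  proof -
    have "(LINT z|lborel. low z) = 1\<^sup>2 * (LINT u|lborel. low (a + 1 *\<^sub>R u))"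
      by (rule integral_affine_complex[OF _ mlow]) simp
    also have "(\<lambda>u. low (a + 1 *\<^sub>R u)) = (\<lambda>u. exp (- \<phi> a) * (indicator (ball 0 \<rho>) u * ((cmod (F u))\<^sup>2 * exp (- k * (norm u)\<^sup>2))))"
      by (auto simp: fun_eq_iff low_def G_def indicator_def dist_norm)
    finally show ?thesis by simp
  qed
  have step3: "(LINT u|lborel. indicator (ball 0 \<rho>) u * ((cmod (F u))\<^sup>2 * exp (- k * (norm u)\<^sup>2)))
      \<ge> (LINT (u::complex)|lborel. indicator (ball 0 \<rho>) u * exp (- k * (norm u)\<^sup>2))"
    using key_ineq[OF holF F0 \<rho>, of "\<lambda>t. exp (- k * t\<^sup>2)"] by (simp add: continuous_intros)
  have step4: "(LINT (u::complex)|lborel. indicator (ball 0 \<rho>) u * exp (- k * (norm u)\<^sup>2)) \<ge> pi * \<rho>\<^sup>2 - k * pi * \<rho>^4 / 2"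
    by (rule weight_lb[OF \<rho>(1)])
  have "exp (- \<phi> a) * (pi * \<rho>\<^sup>2 - k * pi * \<rho>^4 / 2) \<le> (LINT z|lborel. low z)"
    unfolding step2 using step3 step4 by (intro mult_left_mono) auto
  with step1 show ?thesis by linarith
qed



lemma f_lower:
  fixes f :: "complex \<Rightarrow> complex" and \<phi> :: "complex \<Rightarrow> real"
  assumes sm: "smooth_on \<Omega> \<phi>" and \<delta>: "ball a \<delta> \<subseteq> \<Omega>"
    and tay: "\<And>u. norm u < \<delta> \<Longrightarrow> \<phi> (a + u) \<le> \<phi> a + Re (\<beta> * u + \<alpha> * u\<^sup>2) + k * (norm u)\<^sup>2"
    and r: "0 < r" "r \<le> \<delta>"
    and holf: "f holomorphic_on ball a r" and fa: "f a = 1"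
    and intf: "integrable lborel (\<lambda>z. indicator (ball a r) z *\<^sub>R ((cmod (f z))\<^sup>2 * exp (- \<phi> z)))"
  shows "(LINT z|lborel. indicator (ball a r) z *\<^sub>R ((cmod (f z))\<^sup>2 * exp (- \<phi> z)))
      \<ge> exp (- \<phi> a) * (pi * r\<^sup>2 - k * pi * r^4 / 2)"
proof -
  define X where "X = (LINT z|lborel. indicator (ball a r) z *\<^sub>R ((cmod (f z))\<^sup>2 * exp (- \<phi> z)))"
  have lim: "((\<lambda>\<rho>. exp (- \<phi> a) * (pi * \<rho>\<^sup>2 - k * pi * \<rho>^4 / 2)) \<longlongrightarrow> exp (- \<phi> a) * (pi * r\<^sup>2 - k * pi * r^4 / 2)) (at_left r)"
    by (intro tendsto_intros) auto
  have ev: "eventually (\<lambda>\<rho>. exp (- \<phi> a) * (pi * \<rho>\<^sup>2 - k * pi * \<rho>^4 / 2) \<le> X) (at_left r)"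
  proof -
    have "eventually (\<lambda>\<rho>. \<rho> \<in> {0<..<r}) (at_left r)"
      using r by (intro eventually_at_left_real) auto
    then show ?thesis
    proof (rule eventually_mono)
      fix \<rho> assume "\<rho> \<in> {0<..<r}"
      then show "exp (- \<phi> a) * (pi * \<rho>\<^sup>2 - k * pi * \<rho>^4 / 2) \<le> X"
        unfolding X_def by (intro f_lower_rho[OF sm \<delta> tay r _ _ holf fa intf]) auto
    qed
  qed
  have "exp (- \<phi> a) * (pi * r\<^sup>2 - k * pi * r^4 / 2) \<le> X"
    by (rule tendsto_le[OF trivial_limit_at_left_real tendsto_const lim ev])
  then show ?thesis by (simp add: X_def)
qed

lemma L_lower:
  fixes \<phi> :: "complex \<Rightarrow> real"
  assumes sm: "smooth_on \<Omega> \<phi>" and \<delta>: "ball a \<delta> \<subseteq> \<Omega>"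
    and tay: "\<And>u. norm u < \<delta> \<Longrightarrow> \<phi> (a + u) \<le> \<phi> a + Re (\<beta> * u + \<alpha> * u\<^sup>2) + k * (norm u)\<^sup>2"
    and r: "0 < r" "r < \<delta>"
  shows "L2_ext_index \<phi> a r \<ge> 1 - k * r\<^sup>2 / 2"
  unfolding L2_ext_index_def
proof (rule cInf_greatest)
  have contphi: "continuous_on (cball a r) \<phi>"
    by (rule continuous_on_subset[OF cont_phi[OF sm]]) (use \<delta> r in auto)
  have "integrable lborel (\<lambda>z. indicator (ball a r) z *\<^sub>R ((cmod (1::complex))\<^sup>2 * exp (- \<phi> z)))"
    by (rule integrable_ball_cont') (intro continuous_intros contphi)
  then show "{(LINT z:ball a r|lborel. (cmod (f z))\<^sup>2 * exp (- \<phi> z)) / (pi * r\<^sup>2 * exp (- \<phi> a)) | f.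
        f holomorphic_on ball a r \<and> f a = 1 \<and>
        set_integrable lborel (ball a r) (\<lambda>z. (cmod (f z))\<^sup>2 * exp (- \<phi> z))} \<noteq> {}"
    unfolding set_integrable_def
    by (auto intro!: exI[of _ "\<lambda>_. 1"])
next
  fix x assume "x \<in> {(LINT z:ball a r|lborel. (cmod (f z))\<^sup>2 * exp (- \<phi> z)) / (pi * r\<^sup>2 * exp (- \<phi> a)) | f.
        f holomorphic_on ball a r \<and> f a = 1 \<and>
        set_integrable lborel (ball a r) (\<lambda>z. (cmod (f z))\<^sup>2 * exp (- \<phi> z))}"
  then obtain f where x: "x = (LINT z|lborel. indicator (ball a r) z *\<^sub>R ((cmod (f z))\<^sup>2 * exp (- \<phi> z))) / (pi * r\<^sup>2 * exp (- \<phi> a))"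
    and holf: "f holomorphic_on ball a r" and fa: "f a = 1"
    and intf: "integrable lborel (\<lambda>z. indicator (ball a r) z *\<^sub>R ((cmod (f z))\<^sup>2 * exp (- \<phi> z)))"
    unfolding set_integrable_def set_lebesgue_integral_def by blast
  have low: "(LINT z|lborel. indicator (ball a r) z *\<^sub>R ((cmod (f z))\<^sup>2 * exp (- \<phi> z)))
      \<ge> exp (- \<phi> a) * (pi * r\<^sup>2 - k * pi * r^4 / 2)"
    using f_lower[OF sm \<delta> tay r(1) _ holf fa intf] r by simp
  have pos: "pi * r\<^sup>2 * exp (- \<phi> a) > 0" using r by simp
  have "1 - k * r\<^sup>2 / 2 = exp (- \<phi> a) * (pi * r\<^sup>2 - k * pi * r^4 / 2) / (pi * r\<^sup>2 * exp (- \<phi> a))"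
    using r by (simp add: field_simps power2_eq_square power4_eq_xxxx)
  also have "\<dots> \<le> x" unfolding x using low pos by (intro divide_right_mono) auto
  finally show "1 - k * r\<^sup>2 / 2 \<le> x" .
qed



lemma quad_id:
  fixes z :: complex
  shows "px * Re z + py * Im z + A / 2 * (Re z)\<^sup>2 + B * Re z * Im z + D / 2 * (Im z)\<^sup>2
     = Re (Complex px (- py) * z + Complex ((A - D) / 4) (- B / 2) * z\<^sup>2) + (A + D) / 4 * (norm z)\<^sup>2"
  by (simp only: cmod_power2) (simp add: power2_eq_square field_simps)

lemma exp_neg_bound:
  fixes y :: real assumes "y \<ge> 0" shows "exp (- y) \<le> 1 - y + y\<^sup>2"
proof -
  have "1 + y \<le> exp y" by (rule exp_ge_add_one_self)
  then have "exp (- y) \<le> 1 / (1 + y)"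
    using assms by (simp add: exp_minus inverse_eq_divide frac_le)
  also have "\<dots> \<le> 1 - y + y\<^sup>2"
  proof -
    have "1 \<le> (1 - y + y\<^sup>2) * (1 + y)" using assms by (simp add: algebra_simps power2_eq_square power3_eq_cube)
    then show ?thesis using assms by (simp add: field_simps)
  qed
  finally show ?thesis .
qed

theorem theorem1p3:
  fixes \<Omega> :: "complex set" and \<phi> :: "complex \<Rightarrow> real"
    and \<gamma> :: "complex \<Rightarrow> real" and g :: "complex \<Rightarrow> real \<Rightarrow> real"
  assumes "open \<Omega>" and "connected \<Omega>" and "bounded \<Omega>"
    and "smooth_on \<Omega> \<phi>"
    and "\<And>a. a \<in> \<Omega> \<Longrightarrow> 0 < \<gamma> a \<and> \<gamma> a < delta \<Omega> a"
    and "\<And>a. a \<in> \<Omega> \<Longrightarrow> lower_semicontinuous_on {0..\<gamma> a} (g a)"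
    and "\<And>a r. a \<in> \<Omega> \<Longrightarrow> r \<in> {0..\<gamma> a} \<Longrightarrow> 0 \<le> g a r"
    and "\<And>a r. a \<in> \<Omega> \<Longrightarrow> r \<in> {0<..<\<gamma> a} \<Longrightarrow> L2_ext_index \<phi> a r \<le> exp (- g a r * r\<^sup>2)"
  shows "\<forall>a\<in>\<Omega>. dzdzbar \<phi> a \<ge> 2 * g a 0"
proof
  fix a assume a: "a \<in> \<Omega>"
  note op = assms(1) and sm = assms(4)
  have \<gamma>: "0 < \<gamma> a" using assms(5)[OF a] by simp
  have lsc: "lower_semicontinuous_on {0..\<gamma> a} (g a)" by (rule assms(6)[OF a])
  have gnn: "\<And>r. r \<in> {0..\<gamma> a} \<Longrightarrow> 0 \<le> g a r" using assms(7)[OF a] by blast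
  have Lup: "\<And>r. r \<in> {0<..<\<gamma> a} \<Longrightarrow> L2_ext_index \<phi> a r \<le> exp (- g a r * r\<^sup>2)" using assms(8)[OF a] by blast
  define A where "A = pdx (pdx \<phi>) a"
  define B where "B = pdx (pdy \<phi>) a"
  define D where "D = pdy (pdy \<phi>) a"
  define c where "c = dzdzbar \<phi> a"
  have c_eq: "c = (A + D) / 4" by (simp add: c_def dzdzbar_def A_def D_def)
  define g0 where "g0 = g a 0"
  have g0: "0 \<le> g0" unfolding g0_def using gnn \<gamma> by auto
  show "dzdzbar \<phi> a \<ge> 2 * g a 0"
  proof (rule ccontr)
    assume "\<not> dzdzbar \<phi> a \<ge> 2 * g a 0"
    then have cl: "c < 2 * g0" by (simp add: c_def g0_def)
    define d where "d = 2 * g0 - c"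
    have d: "d > 0" using cl by (simp add: d_def)
    define k where "k = c + d / 3"
    define m where "m = g0 - d / 6"
    have mk: "m - k / 2 = d / 6" by (simp add: m_def k_def d_def field_simps)
    obtain \<delta> where \<delta>: "\<delta> > 0" "ball a \<delta> \<subseteq> \<Omega>" and tay0: "\<forall>z. norm z < \<delta> \<longrightarrow>
       \<phi> (a + z) \<le> \<phi> a + pdx \<phi> a * Re z + pdy \<phi> a * Im z
        + pdx (pdx \<phi>) a / 2 * (Re z)\<^sup>2 + pdx (pdy \<phi>) a * Re z * Im z + pdy (pdy \<phi>) a / 2 * (Im z)\<^sup>2
        + d / 3 * (norm z)\<^sup>2"
      using taylor_bound[OF op sm a, of "d / 3"] d by auto
    define \<beta> where "\<beta> = Complex (pdx \<phi> a) (- pdy \<phi> a)"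
    define \<alpha> where "\<alpha> = Complex ((A - D) / 4) (- B / 2)"
    have tay: "\<phi> (a + u) \<le> \<phi> a + Re (\<beta> * u + \<alpha> * u\<^sup>2) + k * (norm u)\<^sup>2" if "norm u < \<delta>" for u
    proof -
      have "\<phi> (a + u) \<le> \<phi> a + (pdx \<phi> a * Re u + pdy \<phi> a * Im u
        + A / 2 * (Re u)\<^sup>2 + B * Re u * Im u + D / 2 * (Im u)\<^sup>2) + d / 3 * (norm u)\<^sup>2"
        using tay0 that by (simp add: A_def B_def D_def add.assoc)
      also have "\<dots> = \<phi> a + Re (\<beta> * u + \<alpha> * u\<^sup>2) + k * (norm u)\<^sup>2"
        unfolding quad_id \<beta>_def \<alpha>_def k_def c_eq by (simp add: algebra_simps)
      finally show ?thesis .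
    qed
    obtain d1 where d1: "d1 > 0" "\<And>y. y \<in> {0..\<gamma> a} \<Longrightarrow> 0 < dist y 0 \<Longrightarrow> dist y 0 < d1 \<Longrightarrow> m < g a y"
    proof -
      have "m < g a 0" using d by (simp add: m_def g0_def)
      then have "\<forall>\<^sub>F y in at 0 within {0..\<gamma> a}. m < g a y"
        using lsc \<gamma> unfolding lower_semicontinuous_on_def by auto
      then obtain d1 where "d1 > 0" "\<forall>y\<in>{0..\<gamma> a}. 0 < dist y 0 \<and> dist y 0 < d1 \<longrightarrow> m < g a y"
        by (auto simp: eventually_at)
      then show ?thesis using that[of d1] by auto
    qed
    define r0 where "r0 = min \<delta> (min (\<gamma> a) d1)"
    have r0: "r0 > 0" using \<delta> \<gamma> d1 by (simp add: r0_def)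
    have mp1: "m\<^sup>2 + 1 > 0" by (metis add_nonneg_pos zero_le_power2 zero_less_one)
    define q where "q = (m - k / 2) / (m\<^sup>2 + 1)"
    have q: "q > 0" unfolding q_def mk using d mp1 by (intro divide_pos_pos) auto
    define r where "r = min (r0 / 2) (sqrt q / 2)"
    have r: "0 < r" "r < \<delta>" "r < \<gamma> a" "r < d1"
      using r0 q by (auto simp: r_def r0_def)
    have r2: "r\<^sup>2 < q"
    proof -
      have "r \<le> sqrt q / 2" by (simp add: r_def)
      moreover have "sqrt q > 0" using q by simp
      ultimately have "r < sqrt q" by linarith
      then have "r\<^sup>2 < (sqrt q)\<^sup>2" using r(1) by (intro power_strict_mono) auto
      then show ?thesis using q by simp
    qed
    have Llow: "L2_ext_index \<phi> a r \<ge> 1 - k * r\<^sup>2 / 2"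
      by (rule L_lower[OF sm \<delta>(2) tay r(1,2)])
    have Lu: "L2_ext_index \<phi> a r \<le> exp (- g a r * r\<^sup>2)" using Lup r by auto
    have gm: "m < g a r" using d1(2)[of r] r by (auto simp: dist_real_def)
    have gr0: "0 \<le> g a r" using gnn r by auto
    have r2p: "r\<^sup>2 > 0" using r by simp
    show False
    proof (cases "m \<le> 0")
      case True
      then have "k < 0" using mk d by linarith
      then have "1 < 1 - k * r\<^sup>2 / 2" using r2p by (simp add: mult_neg_pos)
      moreover have "exp (- g a r * r\<^sup>2) \<le> 1" using gr0 r2p by simp
      ultimately show False using Llow Lu by linarith
    next
      case False
      then have mp: "m > 0" by simp
      have "exp (- g a r * r\<^sup>2) \<le> exp (- (m * r\<^sup>2))"
        using gm r2p by (simp add: mult_strict_right_mono less_imp_le)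
      also have "\<dots> \<le> 1 - m * r\<^sup>2 + (m * r\<^sup>2)\<^sup>2"
        by (rule exp_neg_bound) (use mp r2p in simp)
      finally have "1 - k * r\<^sup>2 / 2 \<le> 1 - m * r\<^sup>2 + (m * r\<^sup>2)\<^sup>2" using Llow Lu by linarith
      then have "(m - k / 2) * r\<^sup>2 \<le> m\<^sup>2 * r\<^sup>2 * r\<^sup>2" by (simp add: algebra_simps power2_eq_square)
      then have le: "m - k / 2 \<le> m\<^sup>2 * r\<^sup>2" using r2p by (simp add: mult_le_cancel_right)
      have "m\<^sup>2 * r\<^sup>2 \<le> (m\<^sup>2 + 1) * r\<^sup>2" using r2p by (simp add: algebra_simps)
      also have "\<dots> < (m\<^sup>2 + 1) * q" using r2 mp1 by simp
      also have "\<dots> = m - k / 2" using mp1 by (simp add: q_def)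
      finally show False using le by simp
    qed
  qed
qed


end
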